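(* For each of the following monads $T$, the associated monad $D$ is idempotent: (a) the Giry monad $P$ of probability measures on $\mathbf{Meas}$; (b) the monad $M$ of subprobability measures on $\mathbf{Meas}$; (c) the lower Vietoris monad $H$ on $\mathbf{Top}$.
   Context: $\mathbf{Meas}$ is the category of measurable spaces and measurable maps. $PX$ is the set of probability measures on $X$, with the coarsest $\sigma$-algebra making $p\mapsto p(A)$ measurable for every measurable $A\subseteq X$; $\eta_X(x)=\delta_x$; $\mu_X(\rho)(A)=\int_{PX}p(A)\,\rho(dp)$; $Pf$ is pushforward. $M$ is defined identically with subprobability measures ($0\le m(X)\le1$). $\mathbf{Top}$ is the category of topological spaces; $HX$ is the set of closed subsets of $X$ (including $\emptyset$) with topology generated by the sets $\{C: C\cap U\neq\emptyset\}$ for $U\subseteq X$ open; $\eta_X(x)=\overline{\{x\}}$; $\mu_X(\mathcal{C})=\overline{\bigcup_{C\in\mathcal{C}}C}$; $Hf(C)=\overline{f(C)}$. For a monad $T$ on $\mathbb{C}$, $\theta_X:DX\to TX$ denotes the equalizer of $\eta_{TX},T\eta_X:TX\to TTX$; $D$ is a monad with $Dg$ the unique map with $\theta_Z\circ Dg=Tg\circ\theta_Y$, unit $e_X$ the unique map with $\theta_X\circ e_X=\eta_X$, and multiplication $m_X$ the unique map with $\theta_X\circ m_X=\mu_X\circ T\theta_X\circ\theta_{DX}$. A monad is idempotent if its multiplication is an isomorphism. *)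

theory Defs
  imports "HOL-Probability.Probability"
begin

definition meas_iso :: "'a measure \<Rightarrow> 'b measure \<Rightarrow> ('a \<Rightarrow> 'b) \<Rightarrow> bool" where
  "meas_iso A B f \<longleftrightarrow> (\<exists>g. f \<in> A \<rightarrow>\<^sub>M B \<and> g \<in> B \<rightarrow>\<^sub>M A \<and>
      (\<forall>x\<in>space A. g (f x) = x) \<and> (\<forall>y\<in>space B. f (g y) = y))"

text \<open>(a) Giry monad P = prob_algebra, unit return, multiplication join, P f = distr.
  D X is the equalizer of eta_{PX} and P eta_X: the subset of PX with the subspace sigma-algebra.
  theta_X is the inclusion; m_X is determined by theta_X o m_X = mu_X o P theta_X o theta_{DX}.\<close>
definition DP :: "'a measure \<Rightarrow> 'a measure measure" where
  "DP X = restrict_space (prob_algebra X)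
     {p \<in> space (prob_algebra X). return (prob_algebra X) p = distr p (prob_algebra X) (return X)}"

definition mP :: "'a measure \<Rightarrow> 'a measure measure \<Rightarrow> 'a measure" where
  "mP X q = join (distr q (subprob_algebra X) (\<lambda>p. p))"

definition DM :: "'a measure \<Rightarrow> 'a measure measure" where
  "DM X = restrict_space (subprob_algebra X)
     {p \<in> space (subprob_algebra X). return (subprob_algebra X) p = distr p (subprob_algebra X) (return X)}"

definition mM :: "'a measure \<Rightarrow> 'a measure measure \<Rightarrow> 'a measure" where
  "mM X q = join (distr q (subprob_algebra X) (\<lambda>p. p))"

text \<open>(c) Lower Vietoris monad H on Top.  HX: closed sets of X, topology generated by the
  subbasis {C. C meets U}, U open (the whole carrier is included so that the empty set is a point).\<close>
definition lower_vietoris :: "'a topology \<Rightarrow> 'a set topology" where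
  "lower_vietoris X = topology_generated_by
     (insert {C. closedin X C} ((\<lambda>U. {C. closedin X C \<and> C \<inter> U \<noteq> {}}) ` {U. openin X U}))"

definition DH :: "'a topology \<Rightarrow> 'a set topology" where
  "DH X = subtopology (lower_vietoris X)
     {C \<in> topspace (lower_vietoris X).
        (lower_vietoris X) closure_of {C} = (lower_vietoris X) closure_of ((\<lambda>x. X closure_of {x}) ` C)}"

definition mH :: "'a topology \<Rightarrow> 'a set set \<Rightarrow> 'a set" where
  "mH X \<C> = X closure_of (\<Union> ((lower_vietoris X) closure_of \<C>))"

end

theory Submission
  imports Defs
begin

definition zo :: "'a measure \<Rightarrow> 'a measure \<Rightarrow> bool" where
 "zo X p \<longleftrightarrow> prob_space p \<and> sets p = sets X \<and> (\<forall>S\<in>sets X. emeasure p S = 0 \<or> emeasure p S = 1)"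

lemma subprob_sets_induct:
  assumes sa: "sigma_algebra (space (subprob_algebra K)) \<Sigma>"
  and gen: "\<And>A B. A \<in> sets K \<Longrightarrow> B \<in> sets borel \<Longrightarrow> {M \<in> space (subprob_algebra K). emeasure M A \<in> B} \<in> \<Sigma>"
  shows "sets (subprob_algebra K) \<subseteq> \<Sigma>"
proof -
  interpret sigma_algebra "space (subprob_algebra K)" \<Sigma> by fact
  let ?M = "measure_of (space (subprob_algebra K)) \<Sigma> (\<lambda>_. 0)"
  have sM: "sets ?M = \<Sigma>" and spM: "space ?M = space (subprob_algebra K)"
    using sets_measure_of[OF space_closed] space_measure_of[OF space_closed] by auto
  have m: "(\<lambda>x. x) \<in> ?M \<rightarrow>\<^sub>M subprob_algebra K"
  proof (rule measurable_subprob_algebra)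
    fix a assume "a \<in> space ?M" then have "a \<in> space (subprob_algebra K)" by (simp only: spM)
    then show "subprob_space a" "sets a = sets K" by (auto simp: space_subprob_algebra)
  next
    fix A assume A: "A \<in> sets K"
    show "(\<lambda>a. emeasure a A) \<in> borel_measurable ?M"
      unfolding measurable_def
    proof (intro CollectI conjI ballI)
      fix B :: "ennreal set" assume "B \<in> sets borel"
      then have "{M \<in> space (subprob_algebra K). emeasure M A \<in> B} \<in> \<Sigma>" using gen A by auto
      moreover have "(\<lambda>a. emeasure a A) -` B \<inter> space ?M = {M \<in> space (subprob_algebra K). emeasure M A \<in> B}"
        by (auto simp: spM)
      ultimately show "(\<lambda>a. emeasure a A) -` B \<inter> space ?M \<in> sets ?M" by (simp add: sM)
    qed auto
  qed
  show ?thesis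
  proof
    fix S assume S: "S \<in> sets (subprob_algebra K)"
    have "(\<lambda>x. x) -` S \<inter> space ?M \<in> sets ?M" using measurable_sets[OF m S] .
    moreover have "(\<lambda>x. x) -` S \<inter> space ?M = S" using sets.sets_into_space[OF S] by (auto simp: spM)
    ultimately show "S \<in> \<Sigma>" by (simp add: sM)
  qed
qed

lemma zo_UN:
  fixes E :: "nat \<Rightarrow> 'a set"
  assumes q: "prob_space q" and E: "range E \<subseteq> sets q" and z: "\<And>i. emeasure q (E i) = 0 \<or> emeasure q (E i) = 1"
  shows "emeasure q (\<Union>i. E i) = (if \<exists>i. emeasure q (E i) = 1 then 1 else 0)"
proof (cases "\<exists>i. emeasure q (E i) = 1")
  case True
  then obtain i where i: "emeasure q (E i) = 1" by blast
  have U: "(\<Union>i. E i) \<in> sets q" using sets.countable_UN[of E UNIV q] E by simp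
  have "emeasure q (E i) \<le> emeasure q (\<Union>i. E i)"
    by (rule emeasure_mono[OF _ U]) auto
  moreover have "emeasure q (\<Union>i. E i) \<le> 1" using prob_space.emeasure_le_1[OF q] by auto
  ultimately show ?thesis using True i by (auto intro: antisym)
next
  case False
  then have "\<And>i. emeasure q (E i) = 0" using z by blast
  then show ?thesis using emeasure_UN_eq_0[OF _ E] False by auto
qed

lemma zo_gen:
  assumes q: "prob_space q" and E: "E \<in> sets q" and z: "emeasure q E = 0 \<or> emeasure q E = 1"
  shows "emeasure q ((if (1::ennreal)\<in>B then E else {}) \<union> (if (0::ennreal)\<in>B then space q - E else {}))
     = (if emeasure q E \<in> B then 1 else 0)"
proof -
  interpret prob_space q by fact
  have c: "emeasure q (space q - E) = 1 - emeasure q E"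
    using emeasure_compl[OF E] emeasure_space_1 by simp
  have u: "emeasure q (space q) = 1" using prob_space.emeasure_space_1[OF q] .
  show ?thesis
  proof (cases "(1::ennreal)\<in>B")
    case True
    show ?thesis
    proof (cases "(0::ennreal)\<in>B")
      case True
      have "E \<union> (space q - E) = space q" using sets.sets_into_space[OF E] by auto
      then show ?thesis using \<open>1 \<in> B\<close> True u z by auto
    next
      case False
      then show ?thesis using \<open>1 \<in> B\<close> z by auto
    qed
  next
    case False
    show ?thesis
    proof (cases "(0::ennreal)\<in>B")
      case True
      then show ?thesis using \<open>1 \<notin> B\<close> z c by auto
    next
      case F: False
      then show ?thesis using \<open>1 \<notin> B\<close> z by auto
    qed
  qed
qed

lemma zo_space: "zo X p \<Longrightarrow> p \<in> space (subprob_algebra X)"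
  by (auto simp: zo_def space_subprob_algebra prob_space_imp_subprob_space)

lemma zo_return_eq:
  assumes zq: "zo Y q" and A: "\<A> \<in> sets (subprob_algebra Y)"
  shows "emeasure q (return Y -` \<A> \<inter> space Y) = indicator \<A> q"
proof -
  have q: "prob_space q" and sq: "sets q = sets Y" using zq by (auto simp: zo_def)
  interpret prob_space q by fact
  have spq: "space q = space Y" using sq by (rule sets_eq_imp_space_eq)
  have z: "\<And>S. S \<in> sets Y \<Longrightarrow> emeasure q S = 0 \<or> emeasure q S = 1" using zq by (auto simp: zo_def)
  have qS: "q \<in> space (subprob_algebra Y)" using zq by (rule zo_space)
  have pre: "\<And>\<A>. \<A> \<in> sets (subprob_algebra Y) \<Longrightarrow> return Y -` \<A> \<inter> space Y \<in> sets Y"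
    using measurable_sets[OF return_measurable] by blast
  have rs: "\<And>y. y \<in> space Y \<Longrightarrow> return Y y \<in> space (subprob_algebra Y)"
    by (simp add: space_subprob_algebra subprob_space_return)
  define \<Sigma> where "\<Sigma> = {\<A> \<in> sets (subprob_algebra Y). emeasure q (return Y -` \<A> \<inter> space Y) = indicator \<A> q}"
  have "sets (subprob_algebra Y) \<subseteq> \<Sigma>"
  proof (rule subprob_sets_induct)
    show "sigma_algebra (space (subprob_algebra Y)) \<Sigma>"
      unfolding sigma_algebra_iff2
    proof (intro conjI ballI allI impI)
      show "\<Sigma> \<subseteq> Pow (space (subprob_algebra Y))" using sets.sets_into_space by (auto simp: \<Sigma>_def)
      show "{} \<in> \<Sigma>" by (simp add: \<Sigma>_def)
    next
      fix s assume s: "s \<in> \<Sigma>"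
      have sS: "s \<in> sets (subprob_algebra Y)" using s by (simp add: \<Sigma>_def)
      have ev: "emeasure q (return Y -` s \<inter> space Y) = indicator s q" using s by (simp add: \<Sigma>_def)
      have eq: "return Y -` (space (subprob_algebra Y) - s) \<inter> space Y = space q - (return Y -` s \<inter> space Y)"
        using rs by (auto simp: spq)
      have E: "return Y -` s \<inter> space Y \<in> sets q" using pre[OF sS] sq by simp
      have "emeasure q (space q - (return Y -` s \<inter> space Y)) = 1 - emeasure q (return Y -` s \<inter> space Y)"
        using emeasure_compl[OF E] emeasure_space_1 by simp
      then have "emeasure q (return Y -` (space (subprob_algebra Y) - s) \<inter> space Y) = indicator (space (subprob_algebra Y) - s) q"
        using eq ev qS by (auto simp: indicator_def)
      then show "space (subprob_algebra Y) - s \<in> \<Sigma>" using sS by (auto simp: \<Sigma>_def)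
    next
      fix A :: "nat \<Rightarrow> _" assume A: "range A \<subseteq> \<Sigma>"
      have AS: "range A \<subseteq> sets (subprob_algebra Y)" using A by (auto simp: \<Sigma>_def)
      have ev: "\<And>i. emeasure q (return Y -` A i \<inter> space Y) = indicator (A i) q" using A by (auto simp: \<Sigma>_def)
      have U: "(\<Union>i. A i) \<in> sets (subprob_algebra Y)" using sets.countable_UN[of A UNIV] AS by simp
      have eq: "return Y -` (\<Union>i. A i) \<inter> space Y = (\<Union>i. return Y -` A i \<inter> space Y)" by auto
      have R: "range (\<lambda>i. return Y -` A i \<inter> space Y) \<subseteq> sets q" using pre AS sq by auto
      have "emeasure q (\<Union>i. return Y -` A i \<inter> space Y) = (if \<exists>i. emeasure q (return Y -` A i \<inter> space Y) = 1 then 1 else 0)"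
        by (rule zo_UN[OF q R]) (simp add: ev indicator_def)
      then show "(\<Union>i. A i) \<in> \<Sigma>" using U by (auto simp: \<Sigma>_def eq ev indicator_def)
    qed
  next
    fix A B assume A: "A \<in> sets Y" and B: "(B::ennreal set) \<in> sets borel"
    let ?G = "{M \<in> space (subprob_algebra Y). emeasure M A \<in> B}"
    have "(\<lambda>M. emeasure M A) -` B \<inter> space (subprob_algebra Y) \<in> sets (subprob_algebra Y)"
      using measurable_sets[OF measurable_emeasure_subprob_algebra[OF A] B] .
    moreover have "(\<lambda>M. emeasure M A) -` B \<inter> space (subprob_algebra Y) = ?G" by auto
    ultimately have GS: "?G \<in> sets (subprob_algebra Y)" by simp
    have Asp: "A \<subseteq> space Y" using sets.sets_into_space[OF A] .
    have eq: "return Y -` ?G \<inter> space Y = (if (1::ennreal)\<in>B then A else {}) \<union> (if (0::ennreal)\<in>B then space q - A else {})"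
      using rs Asp A by (auto simp: spq indicator_def split: if_splits)
    have "emeasure q (return Y -` ?G \<inter> space Y) = (if emeasure q A \<in> B then 1 else 0)"
      unfolding eq by (rule zo_gen[OF q]) (use A sq z in auto)
    then show "?G \<in> \<Sigma>" using GS qS by (auto simp: \<Sigma>_def indicator_def)
  qed
  then show ?thesis using A by (auto simp: \<Sigma>_def)
qed

definition amb :: "'a measure \<Rightarrow> 'a measure measure \<Rightarrow> bool" where
 "amb X A \<longleftrightarrow> space A \<subseteq> space (subprob_algebra X) \<and> sets A = (\<inter>) (space A) ` sets (subprob_algebra X)
   \<and> return X \<in> X \<rightarrow>\<^sub>M A \<and> (\<forall>p. zo X p \<longrightarrow> p \<in> space A)"

definition GD :: "'a measure measure \<Rightarrow> 'a measure \<Rightarrow> 'a measure measure" where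
 "GD A X = restrict_space A {p \<in> space A. return A p = distr p A (return X)}"

lemma trace_in:
  assumes "sets A = (\<inter>) (space A) ` sets N" "G \<in> sets N"
  shows "space A \<inter> G \<in> sets A"
proof -
  have "space A \<inter> G \<in> (\<inter>) (space A) ` sets N" using assms(2) by (rule imageI)
  then show ?thesis by (simp only: assms(1))
qed

lemma trace_obtain:
  assumes "sets A = (\<inter>) (space A) ` sets N" "T \<in> sets A"
  obtains G where "G \<in> sets N" "T = space A \<inter> G"
proof -
  have "T \<in> (\<inter>) (space A) ` sets N" using assms(2) by (simp only: assms(1))
  then show ?thesis using that by blast
qed

lemma traced_into:
  assumes "sets A = (\<inter>) (space A) ` sets N" "f \<in> M \<rightarrow>\<^sub>M N" "f \<in> space M \<rightarrow> space A"
  shows "f \<in> M \<rightarrow>\<^sub>M A"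
proof -
  have "sets A = sets (restrict_space N (space A))" unfolding sets_restrict_space by (rule assms(1))
  moreover have "f \<in> M \<rightarrow>\<^sub>M restrict_space N (space A)"
    using assms(2,3) by (rule measurable_restrict_space2[rotated])
  ultimately show ?thesis using measurable_cong_sets[OF refl, of A "restrict_space N (space A)" M] by blast
qed

lemma traced_from:
  assumes "sets A = (\<inter>) (space A) ` sets N" "f \<in> N \<rightarrow>\<^sub>M L"
  shows "f \<in> A \<rightarrow>\<^sub>M L"
proof -
  have "sets A = sets (restrict_space N (space A))" unfolding sets_restrict_space by (rule assms(1))
  moreover have "f \<in> restrict_space N (space A) \<rightarrow>\<^sub>M L"
    using assms(2) by (rule measurable_restrict_space1)
  ultimately show ?thesis using measurable_cong_sets[OF _ refl, of A "restrict_space N (space A)" L] by blast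
qed

lemma amb_L1:
  assumes a: "amb X A" and p: "p \<in> space A" and e: "return A p = distr p A (return X)"
  shows "zo X p"
proof -
  have spA: "space A \<subseteq> space (subprob_algebra X)" and sA: "sets A = (\<inter>) (space A) ` sets (subprob_algebra X)"
    and rA: "return X \<in> X \<rightarrow>\<^sub>M A" using a unfolding amb_def by blast+
  have pS: "p \<in> space (subprob_algebra X)" using p spA by auto
  have sp: "sets p = sets X" and ssp: "subprob_space p" using pS by (auto simp: space_subprob_algebra)
  have spp: "space p = space X" using sp by (rule sets_eq_imp_space_eq)
  have rAp: "return X \<in> p \<rightarrow>\<^sub>M A" by (subst measurable_cong_sets[OF sp refl]) (rule rA)
  have rs: "\<And>y. y \<in> space X \<Longrightarrow> return X y \<in> space A" using measurable_space[OF rA] by blast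
  have key: "\<And>\<A>. \<A> \<in> sets A \<Longrightarrow> indicator \<A> p = emeasure p (return X -` \<A> \<inter> space X)"
  proof -
    fix \<A> assume "\<A> \<in> sets A"
    have "emeasure (return A p) \<A> = emeasure (distr p A (return X)) \<A>" using e by simp
    then show "indicator \<A> p = emeasure p (return X -` \<A> \<inter> space X)"
      using \<open>\<A> \<in> sets A\<close> by (simp add: emeasure_distr[OF rAp] spp)
  qed
  have "return X -` space A \<inter> space X = space X" using rs by blast
  then have "emeasure p (space X) = 1"
    using key[OF sets.top] p by (simp add: indicator_def)
  then have pp: "prob_space p" by (intro prob_spaceI) (simp add: spp)
  have zz: "emeasure p S = 0 \<or> emeasure p S = 1" if S: "S \<in> sets X" for S
  proof -
    let ?A = "space A \<inter> {M \<in> space (subprob_algebra X). emeasure M S = 1}"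
    have "(\<lambda>M. emeasure M S) -` {1} \<inter> space (subprob_algebra X) \<in> sets (subprob_algebra X)"
      using measurable_sets[OF measurable_emeasure_subprob_algebra[OF S]] by simp
    moreover have "(\<lambda>M. emeasure M S) -` {1} \<inter> space (subprob_algebra X) = {M \<in> space (subprob_algebra X). emeasure M S = 1}" by auto
    ultimately have "{M \<in> space (subprob_algebra X). emeasure M S = 1} \<in> sets (subprob_algebra X)" by simp
    then have "?A \<in> sets A" by (rule trace_in[OF sA])
    note k = key[OF this]
    have "return X -` ?A \<inter> space X = S" using rs spA sets.sets_into_space[OF S]
      by (auto simp: indicator_def S split: if_splits)
    then show ?thesis using k p pS by (auto simp: indicator_def split: if_splits)
  qed
  show ?thesis using pp sp zz by (auto simp: zo_def)
qed

lemma amb_L2: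
  assumes a: "amb X A" and z: "zo X p"
  shows "return A p = distr p A (return X)"
proof -
  have spA: "space A \<subseteq> space (subprob_algebra X)" and sA: "sets A = (\<inter>) (space A) ` sets (subprob_algebra X)"
    and rA: "return X \<in> X \<rightarrow>\<^sub>M A" and pA: "p \<in> space A" using a z unfolding amb_def by blast+
  have sp: "sets p = sets X" using z by (simp add: zo_def)
  have spp: "space p = space X" using sp by (rule sets_eq_imp_space_eq)
  have rAp: "return X \<in> p \<rightarrow>\<^sub>M A" by (subst measurable_cong_sets[OF sp refl]) (rule rA)
  have rs: "\<And>y. y \<in> space X \<Longrightarrow> return X y \<in> space A" using measurable_space[OF rA] by blast
  show ?thesis
  proof (rule measure_eqI)
    show "sets (return A p) = sets (distr p A (return X))" by simp
  next
    fix T assume "T \<in> sets (return A p)"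
    then have T: "T \<in> sets A" by simp
    then obtain \<A> where AS: "\<A> \<in> sets (subprob_algebra X)" and TA: "T = space A \<inter> \<A>" by (rule trace_obtain[OF sA])
    have "return X -` T \<inter> space X = return X -` \<A> \<inter> space X" using rs TA by auto
    then have "emeasure (distr p A (return X)) T = indicator \<A> p"
      using zo_return_eq[OF z AS] T by (simp add: emeasure_distr[OF rAp] spp)
    moreover have "emeasure (return A p) T = indicator \<A> p" using T TA pA by (simp add: indicator_def)
    ultimately show "emeasure (return A p) T = emeasure (distr p A (return X)) T" by simp
  qed
qed

lemma amb_sub: "amb X (subprob_algebra X)"
  unfolding amb_def
proof (intro conjI allI impI)
  have "(\<inter>) (space (subprob_algebra X)) ` sets (subprob_algebra X) = (\<lambda>x. x) ` sets (subprob_algebra X)"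
    by (rule image_cong[OF refl]) (rule sets.Int_space_eq1)
  then show "sets (subprob_algebra X) = (\<inter>) (space (subprob_algebra X)) ` sets (subprob_algebra X)"
    by simp
qed (auto simp: zo_space)

lemma amb_prob: "amb X (prob_algebra X)"
  unfolding amb_def
proof (intro conjI allI impI)
  show "space (prob_algebra X) \<subseteq> space (subprob_algebra X)"
    by (auto simp: space_prob_algebra space_subprob_algebra prob_space_imp_subprob_space)
  have "(\<inter>) {M. prob_space M} ` sets (subprob_algebra X) = (\<inter>) (space (prob_algebra X)) ` sets (subprob_algebra X)"
  proof (rule image_cong[OF refl])
    fix x assume "x \<in> sets (subprob_algebra X)"
    then have "x \<subseteq> space (subprob_algebra X)" by (rule sets.sets_into_space)
    then show "{M. prob_space M} \<inter> x = space (prob_algebra X) \<inter> x"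
      by (auto simp: space_prob_algebra space_subprob_algebra)
  qed
  moreover have "sets (prob_algebra X) = (\<inter>) {M. prob_space M} ` sets (subprob_algebra X)"
    by (simp only: prob_algebra_def sets_restrict_space)
  ultimately show "sets (prob_algebra X) = (\<inter>) (space (prob_algebra X)) ` sets (subprob_algebra X)"
    by (rule trans[rotated])
  show "return X \<in> X \<rightarrow>\<^sub>M prob_algebra X" by (rule measurable_return_prob_space)
  fix p assume "zo X p" then show "p \<in> space (prob_algebra X)" by (auto simp: zo_def space_prob_algebra)
qed

lemma GD_space: assumes a: "amb X A" shows "space (GD A X) = {p. zo X p}"
proof -
  have pA: "\<And>p. zo X p \<Longrightarrow> p \<in> space A" using a unfolding amb_def by blast
  show ?thesis unfolding GD_def space_restrict_space using amb_L1[OF a] amb_L2[OF a] pA by blast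
qed

lemma GD_sets: assumes a: "amb X A" shows "sets (GD A X) = (\<inter>) (space (GD A X)) ` sets (subprob_algebra X)"
proof -
  let ?O = "{p \<in> space A. return A p = distr p A (return X)}"
  have sp: "space (GD A X) = ?O" unfolding GD_def space_restrict_space by auto
  have sA: "sets A = (\<inter>) (space A) ` sets (subprob_algebra X)" using a unfolding amb_def by blast
  have "sets (GD A X) = (\<inter>) ?O ` ((\<inter>) (space A) ` sets (subprob_algebra X))"
    unfolding GD_def sets_restrict_space sA ..
  also have "\<dots> = (\<inter>) ?O ` sets (subprob_algebra X)" unfolding image_image
    by (rule image_cong[OF refl]) auto
  finally show ?thesis unfolding sp .
qed

lemma bary_V:
  fixes Y :: "'a measure measure"
  assumes spY: "space Y = {p. zo X p}" and sY: "sets Y = (\<inter>) (space Y) ` sets (subprob_algebra X)"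
  and zq: "zo Y q" and rS: "r \<in> space (subprob_algebra X)"
  and bary: "\<And>S. S \<in> sets X \<Longrightarrow> emeasure r S = emeasure q {p \<in> space Y. emeasure p S = 1}"
  and A: "\<A> \<in> sets (subprob_algebra X)"
  shows "emeasure q (space Y \<inter> \<A>) = indicator \<A> r"
proof -
  have q: "prob_space q" and sq: "sets q = sets Y" using zq by (auto simp: zo_def)
  interpret prob_space q by fact
  have spq: "space q = space Y" using sq by (rule sets_eq_imp_space_eq)
  have z: "\<And>S. S \<in> sets Y \<Longrightarrow> emeasure q S = 0 \<or> emeasure q S = 1" using zq by (auto simp: zo_def)
  have spYS: "space Y \<subseteq> space (subprob_algebra X)" using zo_space spY by blast
  have tr: "\<And>\<A>. \<A> \<in> sets (subprob_algebra X) \<Longrightarrow> space Y \<inter> \<A> \<in> sets Y"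
    by (rule trace_in[OF sY])
  define \<Sigma> where "\<Sigma> = {\<A> \<in> sets (subprob_algebra X). emeasure q (space Y \<inter> \<A>) = indicator \<A> r}"
  have "sets (subprob_algebra X) \<subseteq> \<Sigma>"
  proof (rule subprob_sets_induct)
    show "sigma_algebra (space (subprob_algebra X)) \<Sigma>"
      unfolding sigma_algebra_iff2
    proof (intro conjI ballI allI impI)
      show "\<Sigma> \<subseteq> Pow (space (subprob_algebra X))" using sets.sets_into_space by (auto simp: \<Sigma>_def)
      show "{} \<in> \<Sigma>" by (simp add: \<Sigma>_def)
    next
      fix s assume s: "s \<in> \<Sigma>"
      have sS: "s \<in> sets (subprob_algebra X)" using s by (simp add: \<Sigma>_def)
      have ev: "emeasure q (space Y \<inter> s) = indicator s r" using s by (simp add: \<Sigma>_def)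
      have eq: "space Y \<inter> (space (subprob_algebra X) - s) = space q - (space Y \<inter> s)"
        using spYS by (auto simp: spq)
      have E: "space Y \<inter> s \<in> sets q" using tr[OF sS] sq by simp
      have "emeasure q (space q - (space Y \<inter> s)) = 1 - emeasure q (space Y \<inter> s)"
        using emeasure_compl[OF E] emeasure_space_1 by simp
      then have "emeasure q (space Y \<inter> (space (subprob_algebra X) - s)) = indicator (space (subprob_algebra X) - s) r"
        using eq ev rS by (auto simp: indicator_def)
      then show "space (subprob_algebra X) - s \<in> \<Sigma>" using sS by (auto simp: \<Sigma>_def)
    next
      fix A :: "nat \<Rightarrow> _" assume A: "range A \<subseteq> \<Sigma>"
      have AS: "range A \<subseteq> sets (subprob_algebra X)" using A by (auto simp: \<Sigma>_def)
      have ev: "\<And>i. emeasure q (space Y \<inter> A i) = indicator (A i) r" using A by (auto simp: \<Sigma>_def)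
      have U: "(\<Union>i. A i) \<in> sets (subprob_algebra X)" using sets.countable_UN[of A UNIV] AS by simp
      have eq: "space Y \<inter> (\<Union>i. A i) = (\<Union>i. space Y \<inter> A i)" by auto
      have "\<And>i. space Y \<inter> A i \<in> sets Y" using tr AS by blast
      then have R: "range (\<lambda>i. space Y \<inter> A i) \<subseteq> sets q" unfolding sq by blast
      have m: "emeasure q (\<Union>i. space Y \<inter> A i) = (if \<exists>i. emeasure q (space Y \<inter> A i) = 1 then 1 else 0)"
        by (rule zo_UN[OF q R]) (simp add: ev indicator_def)
      have "emeasure q (space Y \<inter> (\<Union>i. A i)) = indicator (\<Union>i. A i) r"
        unfolding eq m ev by (auto simp: indicator_def)
      then show "(\<Union>i. A i) \<in> \<Sigma>" using U by (simp add: \<Sigma>_def)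
    qed
  next
    fix A B assume A: "A \<in> sets X" and B: "(B::ennreal set) \<in> sets borel"
    let ?G = "{M \<in> space (subprob_algebra X). emeasure M A \<in> B}"
    have "(\<lambda>M. emeasure M A) -` B \<inter> space (subprob_algebra X) \<in> sets (subprob_algebra X)"
      using measurable_sets[OF measurable_emeasure_subprob_algebra[OF A] B] .
    moreover have "(\<lambda>M. emeasure M A) -` B \<inter> space (subprob_algebra X) = ?G" by auto
    ultimately have GS: "?G \<in> sets (subprob_algebra X)" by simp
    let ?E = "{p \<in> space Y. emeasure p A = 1}"
    have "(\<lambda>M. emeasure M A) -` {1} \<inter> space (subprob_algebra X) \<in> sets (subprob_algebra X)"
      using measurable_sets[OF measurable_emeasure_subprob_algebra[OF A]] by simp
    moreover have "(\<lambda>M. emeasure M A) -` {1} \<inter> space (subprob_algebra X) = {M \<in> space (subprob_algebra X). emeasure M A = 1}" by auto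
    ultimately have "{M \<in> space (subprob_algebra X). emeasure M A = 1} \<in> sets (subprob_algebra X)" by simp
    from tr[OF this] have "space Y \<inter> {M \<in> space (subprob_algebra X). emeasure M A = 1} \<in> sets Y" .
    moreover have "space Y \<inter> {M \<in> space (subprob_algebra X). emeasure M A = 1} = ?E" using spYS by auto
    ultimately have ES: "?E \<in> sets Y" by simp
    have pz: "\<And>p. p \<in> space Y \<Longrightarrow> emeasure p A = 0 \<or> emeasure p A = 1"
      using A by (auto simp: spY zo_def)
    have eq: "space Y \<inter> ?G = (if (1::ennreal)\<in>B then ?E else {}) \<union> (if (0::ennreal)\<in>B then space q - ?E else {})"
    proof -
      have "p \<in> ?G \<longleftrightarrow> (1 \<in> B \<and> p \<in> ?E) \<or> (0 \<in> B \<and> p \<notin> ?E)" if p: "p \<in> space Y" for p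
        using pz[OF p] p spYS by (elim disjE) auto
      then show ?thesis by (auto simp: spq)
    qed
    have "emeasure q (space Y \<inter> ?G) = (if emeasure q ?E \<in> B then 1 else 0)"
      unfolding eq by (rule zo_gen[OF q]) (use ES sq z in auto)
    then show "?G \<in> \<Sigma>" using GS rS bary[OF A] by (auto simp: \<Sigma>_def indicator_def)
  qed
  then show ?thesis using A by (auto simp: \<Sigma>_def)
qed

lemma main_iso:
  assumes aX: "amb X A" and aY: "amb (GD A X) A'"
  shows "meas_iso (GD A' (GD A X)) (GD A X) (\<lambda>q. join (distr q (subprob_algebra X) (\<lambda>p. p)))"
proof -
  define Y where "Y = GD A X"
  define Z where "Z = GD A' Y"
  let ?S = "subprob_algebra X"
  have spY: "space Y = {p. zo X p}" unfolding Y_def by (rule GD_space[OF aX])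
  have sY: "sets Y = (\<inter>) (space Y) ` sets ?S" unfolding Y_def by (rule GD_sets[OF aX])
  have spZ: "space Z = {q. zo Y q}" unfolding Z_def by (rule GD_space[OF aY[folded Y_def]])
  have sZ: "sets Z = (\<inter>) (space Z) ` sets (subprob_algebra Y)" unfolding Z_def by (rule GD_sets[OF aY[folded Y_def]])
  define f where "f = (\<lambda>q. join (distr q ?S (\<lambda>p. p)))"
  have idm: "(\<lambda>p. p) \<in> Y \<rightarrow>\<^sub>M ?S" by (rule traced_from[OF sY]) simp
  have fm0: "f \<in> Z \<rightarrow>\<^sub>M ?S"
  proof -
    have "(\<lambda>q. join (distr q ?S (\<lambda>p. p))) \<in> subprob_algebra Y \<rightarrow>\<^sub>M ?S"
      using measurable_comp[OF measurable_distr[OF idm] measurable_join] by (simp add: comp_def)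
    then show ?thesis unfolding f_def by (rule traced_from[OF sZ])
  qed
  have ES: "{p \<in> space Y. emeasure p S = 1} \<in> sets Y" if S: "S \<in> sets X" for S
  proof -
    have "(\<lambda>M. emeasure M S) -` {1} \<inter> space ?S \<in> sets ?S"
      using measurable_sets[OF measurable_emeasure_subprob_algebra[OF S]] by simp
    moreover have "(\<lambda>M. emeasure M S) -` {1} \<inter> space ?S = {M \<in> space ?S. emeasure M S = 1}" by auto
    ultimately have "{M \<in> space ?S. emeasure M S = 1} \<in> sets ?S" by simp
    then have "space Y \<inter> {M \<in> space ?S. emeasure M S = 1} \<in> sets Y" by (rule trace_in[OF sY])
    moreover have "space Y \<inter> {M \<in> space ?S. emeasure M S = 1} = {p \<in> space Y. emeasure p S = 1}"
      using zo_space spY by auto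
    ultimately show ?thesis by simp
  qed
  have bary: "emeasure (f q) S = emeasure q {p \<in> space Y. emeasure p S = 1}" if zq: "zo Y q" and S: "S \<in> sets X" for q S
  proof -
    have sq: "sets q = sets Y" using zq by (simp add: zo_def)
    have spq: "space q = space Y" using sq by (rule sets_eq_imp_space_eq)
    have idq: "(\<lambda>p. p) \<in> q \<rightarrow>\<^sub>M ?S" by (subst measurable_cong_sets[OF sq refl]) (rule idm)
    let ?E = "{p \<in> space Y. emeasure p S = 1}"
    have ESq: "?E \<in> sets q" using ES[OF S] sq by simp
    have "emeasure (f q) S = (\<integral>\<^sup>+ M'. emeasure M' S \<partial>(distr q ?S (\<lambda>p. p)))"
      unfolding f_def by (rule emeasure_join[where N=X]) (simp_all add: S)
    also have "\<dots> = (\<integral>\<^sup>+ p. emeasure p S \<partial>q)"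
      by (rule nn_integral_distr[OF idq]) (simp add: measurable_emeasure_subprob_algebra[OF S])
    also have "\<dots> = (\<integral>\<^sup>+ p. indicator ?E p \<partial>q)"
    proof (rule nn_integral_cong)
      fix p assume pq: "p \<in> space q"
      then have "zo X p" using spq spY by auto
      then have "emeasure p S = 0 \<or> emeasure p S = 1" using S by (simp add: zo_def)
      then show "emeasure p S = indicator ?E p" using pq spq by (auto simp: indicator_def)
    qed
    also have "\<dots> = emeasure q ?E" using ESq by simp
    finally show ?thesis .
  qed
  have fzo: "zo X (f q)" if zq: "zo Y q" for q
  proof -
    have sq: "sets q = sets Y" and qp: "prob_space q" using zq by (auto simp: zo_def)
    have spq: "space q = space Y" using sq by (rule sets_eq_imp_space_eq)
    have sf: "sets (f q) = sets X" unfolding f_def by simp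
    have spf: "space (f q) = space X" using sf by (rule sets_eq_imp_space_eq)
    have all1: "emeasure p (space X) = 1" if p: "p \<in> space Y" for p
    proof -
      have "zo X p" using p spY by simp
      then have "prob_space p" "sets p = sets X" by (auto simp: zo_def)
      then show ?thesis using prob_space.emeasure_space_1 sets_eq_imp_space_eq by metis
    qed
    have "{p \<in> space Y. emeasure p (space X) = 1} = space Y" using all1 by auto
    then have "emeasure (f q) (space X) = 1"
      using bary[OF zq sets.top] prob_space.emeasure_space_1[OF qp] spq by simp
    then have pf: "prob_space (f q)" by (intro prob_spaceI) (simp add: spf)
    have "emeasure (f q) S = 0 \<or> emeasure (f q) S = 1" if S: "S \<in> sets X" for S
      using bary[OF zq S] ES[OF S] zq by (auto simp: zo_def)
    then show ?thesis using pf sf by (simp add: zo_def)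
  qed
  have fret: "return Y (f q) = q" if zq: "zo Y q" for q
  proof (rule measure_eqI)
    have sq: "sets q = sets Y" using zq by (simp add: zo_def)
    show "sets (return Y (f q)) = sets q" using sq by simp
    fix T assume "T \<in> sets (return Y (f q))"
    then have T: "T \<in> sets Y" by simp
    then obtain \<A> where AS: "\<A> \<in> sets ?S" and TA: "T = space Y \<inter> \<A>" by (rule trace_obtain[OF sY])
    have fY: "f q \<in> space Y" using fzo[OF zq] spY by simp
    have "emeasure q T = indicator \<A> (f q)"
      unfolding TA by (rule bary_V[OF spY sY zq zo_space[OF fzo[OF zq]] bary[OF zq] AS])
    moreover have "emeasure (return Y (f q)) T = indicator \<A> (f q)" using T TA fY by (simp add: indicator_def)
    ultimately show "emeasure (return Y (f q)) T = emeasure q T" by simp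
  qed
  have fm: "f \<in> Z \<rightarrow>\<^sub>M Y" by (rule traced_into[OF sY fm0]) (use fzo spZ spY in auto)
  have gz: "zo Y (return Y p)" if p: "p \<in> space Y" for p
    using prob_space_return[OF p] by (auto simp: zo_def indicator_def)
  have gm: "return Y \<in> Y \<rightarrow>\<^sub>M Z" by (rule traced_into[OF sZ return_measurable]) (use gz spZ in auto)
  have fg: "f (return Y p) = p" if p: "p \<in> space Y" for p
  proof -
    have "distr (return Y p) ?S (\<lambda>p. p) = return ?S p" by (rule distr_return[OF idm p])
    moreover have "sets p = sets X" "subprob_space p" using p spY by (auto simp: zo_def prob_space_imp_subprob_space)
    ultimately show ?thesis unfolding f_def using join_return by simp
  qed
  have "meas_iso Z Y f"
    unfolding meas_iso_def using fm gm fg fret spZ by blast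
  then show ?thesis unfolding f_def Z_def Y_def .
qed

lemma DP_GD: "DP X = GD (prob_algebra X) X" by (simp add: DP_def GD_def)
lemma DM_GD: "DM X = GD (subprob_algebra X) X" by (simp add: DM_def GD_def)

lemma partA: "meas_iso (DP (DP X)) (DP X) (mP X)"
proof -
  have "mP X = (\<lambda>q. join (distr q (subprob_algebra X) (\<lambda>p. p)))" by (rule ext) (simp add: mP_def)
  then show ?thesis using main_iso[OF amb_prob amb_prob, of X] by (simp add: DP_GD)
qed

lemma partB: "meas_iso (DM (DM X)) (DM X) (mM X)"
proof -
  have "mM X = (\<lambda>q. join (distr q (subprob_algebra X) (\<lambda>p. p)))" by (rule ext) (simp add: mM_def)
  then show ?thesis using main_iso[OF amb_sub amb_sub, of X] by (simp add: DM_GD)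
qed

definition Irr :: "'a topology \<Rightarrow> 'a set \<Rightarrow> bool" where
  "Irr X C \<longleftrightarrow> closedin X C \<and> C \<noteq> {} \<and>
     (\<forall>U V. openin X U \<longrightarrow> openin X V \<longrightarrow> C \<inter> U \<noteq> {} \<longrightarrow> C \<inter> V \<noteq> {} \<longrightarrow> C \<inter> U \<inter> V \<noteq> {})"

lemma Irr_closed: "Irr X C \<Longrightarrow> closedin X C" by (simp add: Irr_def)

lemma topspace_LV: "topspace (lower_vietoris X) = {C. closedin X C}"
  unfolding lower_vietoris_def by auto

lemma openin_LV_hit: "openin X U \<Longrightarrow> openin (lower_vietoris X) {C. closedin X C \<and> C \<inter> U \<noteq> {}}"
  unfolding lower_vietoris_def by (rule topology_generated_by_Basis) auto

lemma LV_up: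
  assumes "openin (lower_vietoris X) Ob" "D \<in> Ob" "D \<subseteq> C" "closedin X C"
  shows "C \<in> Ob"
proof -
  have g: "generate_topology_on (insert {C. closedin X C} ((\<lambda>U. {C. closedin X C \<and> C \<inter> U \<noteq> {}}) ` {U. openin X U})) Ob"
    using assms(1) unfolding lower_vietoris_def by (rule openin_topology_generated_by)
  have "\<forall>D C. D \<in> Ob \<longrightarrow> D \<subseteq> C \<longrightarrow> closedin X C \<longrightarrow> C \<in> Ob"
    using g
  proof (induct rule: generate_topology_on.induct)
    case (UN K)
    then show ?case by blast
  next
    case (Basis s)
    then show ?case
    proof
      assume "s = {C. closedin X C}" then show ?case by simp
    next
      assume "s \<in> (\<lambda>U. {C. closedin X C \<and> C \<inter> U \<noteq> {}}) ` {U. openin X U}"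
      then obtain U where "s = {C. closedin X C \<and> C \<inter> U \<noteq> {}}" by blast
      then show ?case by auto
    qed
  next
    case (Int a b) then show ?case by blast
  qed simp
  then show ?thesis using assms by blast
qed

lemma cl_single_open: "openin X U \<Longrightarrow> X closure_of {x} \<inter> U \<noteq> {} \<Longrightarrow> x \<in> U"
  by (auto simp: in_closure_of)

lemma Irr_cl_single: assumes x: "x \<in> topspace X" shows "Irr X (X closure_of {x})"
proof -
  have xx: "x \<in> X closure_of {x}" using closure_of_subset[of "{x}" X] x by auto
  show ?thesis unfolding Irr_def
  proof (intro conjI allI impI)
    fix U V assume "openin X U" "openin X V" "X closure_of {x} \<inter> U \<noteq> {}" "X closure_of {x} \<inter> V \<noteq> {}"
    then have "x \<in> U" "x \<in> V" using cl_single_open by metis+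
    then show "X closure_of {x} \<inter> U \<inter> V \<noteq> {}" using xx by blast
  qed (use xx in auto)
qed

lemma opens_char:
  assumes "openin (lower_vietoris X) Ob"
  shows "\<exists>U. openin X U \<and> (\<forall>C. Irr X C \<longrightarrow> (C \<in> Ob \<longleftrightarrow> C \<inter> U \<noteq> {}))"
proof -
  have g: "generate_topology_on (insert {C. closedin X C} ((\<lambda>U. {C. closedin X C \<and> C \<inter> U \<noteq> {}}) ` {U. openin X U})) Ob"
    using assms(1) unfolding lower_vietoris_def by (rule openin_topology_generated_by)
  then show ?thesis
  proof (induct rule: generate_topology_on.induct)
    case Empty
    then show ?case by (intro exI[of _ "{}"]) auto
  next
    case (Int a b)
    then obtain U V where U: "openin X U" "\<forall>C. Irr X C \<longrightarrow> (C \<in> a \<longleftrightarrow> C \<inter> U \<noteq> {})"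
      and V: "openin X V" "\<forall>C. Irr X C \<longrightarrow> (C \<in> b \<longleftrightarrow> C \<inter> V \<noteq> {})" by blast
    show ?case
    proof (intro exI[of _ "U \<inter> V"] conjI allI impI)
      show "openin X (U \<inter> V)" using U V by auto
      fix C assume C: "Irr X C"
      then have "C \<inter> U \<noteq> {} \<Longrightarrow> C \<inter> V \<noteq> {} \<Longrightarrow> C \<inter> U \<inter> V \<noteq> {}"
        using U V unfolding Irr_def by blast
      then have "C \<inter> U \<noteq> {} \<and> C \<inter> V \<noteq> {} \<longleftrightarrow> C \<inter> (U \<inter> V) \<noteq> {}"
        by (auto simp: Int_assoc)
      then show "C \<in> a \<inter> b \<longleftrightarrow> C \<inter> (U \<inter> V) \<noteq> {}" using U V C by blast
    qed
  next
    case (UN K)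
    then have "\<forall>k\<in>K. \<exists>U. openin X U \<and> (\<forall>C. Irr X C \<longrightarrow> (C \<in> k \<longleftrightarrow> C \<inter> U \<noteq> {}))" by blast
    then obtain Uf where Uf: "\<forall>k\<in>K. openin X (Uf k) \<and> (\<forall>C. Irr X C \<longrightarrow> (C \<in> k \<longleftrightarrow> C \<inter> Uf k \<noteq> {}))"
      by metis
    show ?case
    proof (intro exI[of _ "\<Union>(Uf ` K)"] conjI allI impI)
      show "openin X (\<Union>(Uf ` K))" using Uf by auto
      fix C assume "Irr X C"
      then show "C \<in> \<Union>K \<longleftrightarrow> C \<inter> \<Union>(Uf ` K) \<noteq> {}" using Uf by blast
    qed
  next
    case (Basis s)
    then show ?case
    proof
      assume s: "s = {C. closedin X C}"
      show ?case
      proof (intro exI[of _ "topspace X"] conjI allI impI)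
        fix C assume C: "Irr X C"
        then have "C \<subseteq> topspace X" "C \<noteq> {}" "closedin X C" using closedin_subset by (auto simp: Irr_def)
        then show "C \<in> s \<longleftrightarrow> C \<inter> topspace X \<noteq> {}" using s by auto
      qed auto
    next
      assume "s \<in> (\<lambda>U. {C. closedin X C \<and> C \<inter> U \<noteq> {}}) ` {U. openin X U}"
      then obtain U where U: "openin X U" "s = {C. closedin X C \<and> C \<inter> U \<noteq> {}}" by blast
      show ?case by (intro exI[of _ U]) (use U in \<open>auto simp: Irr_def\<close>)
    qed
  qed
qed

lemma Om_1:
  assumes Ct: "C \<in> topspace (lower_vietoris X)"
  and eq: "(lower_vietoris X) closure_of {C} = (lower_vietoris X) closure_of ((\<lambda>x. X closure_of {x}) ` C)"
  shows "Irr X C"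
proof -
  let ?L = "lower_vietoris X"
  have "C \<in> ?L closure_of {C}" using closure_of_subset[of "{C}" ?L] Ct by auto
  then have Cin: "C \<in> ?L closure_of ((\<lambda>x. X closure_of {x}) ` C)" using eq by simp
  have cl: "\<exists>x\<in>C. X closure_of {x} \<in> T" if T1: "C \<in> T" and T2: "openin ?L T" for T
  proof -
    from Cin have "\<forall>T. C \<in> T \<and> openin ?L T \<longrightarrow> (\<exists>y. y \<in> (\<lambda>x. X closure_of {x}) ` C \<and> y \<in> T)"
      unfolding in_closure_of by (rule conjunct2)
    then obtain y where "y \<in> (\<lambda>x. X closure_of {x}) ` C" "y \<in> T" using T1 T2 by blast
    then show ?thesis by blast
  qed
  have Cc: "closedin X C" using Ct by (simp add: topspace_LV)
  have ne: "C \<noteq> {}"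
  proof -
    from cl[OF Ct openin_topspace] obtain x where "x \<in> C" by blast
    then show ?thesis by blast
  qed
  have pw: "C \<inter> U \<inter> V \<noteq> {}" if U: "openin X U" and V: "openin X V" and CU: "C \<inter> U \<noteq> {}" and CV: "C \<inter> V \<noteq> {}" for U V
  proof -
    let ?T = "{C. closedin X C \<and> C \<inter> U \<noteq> {}} \<inter> {C. closedin X C \<and> C \<inter> V \<noteq> {}}"
    have o: "openin ?L ?T" using openin_LV_hit[OF U] openin_LV_hit[OF V] by (rule openin_Int)
    have c: "C \<in> ?T" using Cc CU CV by blast
    from cl[OF c o] obtain x where x1: "x \<in> C" and x2: "X closure_of {x} \<in> ?T" by blast
    from x2 have "X closure_of {x} \<inter> U \<noteq> {}" by blast
    then have xU: "x \<in> U" by (rule cl_single_open[OF U])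
    from x2 have "X closure_of {x} \<inter> V \<noteq> {}" by blast
    then have xV: "x \<in> V" by (rule cl_single_open[OF V])
    show ?thesis using x1 xU xV by blast
  qed
  show "Irr X C" unfolding Irr_def using Cc ne pw by blast
qed

lemma Om_2:
  assumes I: "Irr X C"
  shows "C \<in> topspace (lower_vietoris X)"
    and "(lower_vietoris X) closure_of {C} = (lower_vietoris X) closure_of ((\<lambda>x. X closure_of {x}) ` C)"
proof -
  let ?L = "lower_vietoris X"
  have Cc: "closedin X C" using I by (simp add: Irr_def)
  show Ct: "C \<in> topspace ?L" using Cc by (simp add: topspace_LV)
  have Cts: "C \<subseteq> topspace X" using Cc closedin_subset by auto
  have Cin: "C \<in> ?L closure_of ((\<lambda>x. X closure_of {x}) ` C)"
    unfolding in_closure_of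
  proof (intro conjI allI impI Ct)
    fix T assume T: "C \<in> T \<and> openin ?L T"
    then obtain U where U: "openin X U" "\<forall>C. Irr X C \<longrightarrow> (C \<in> T \<longleftrightarrow> C \<inter> U \<noteq> {})"
      using opens_char by blast
    have "C \<inter> U \<noteq> {}" using U(2)[rule_format, OF I] T by blast
    then obtain x where x: "x \<in> C" "x \<in> U" by blast
    have xt: "x \<in> topspace X" using x Cts by auto
    have "x \<in> X closure_of {x}" using closure_of_subset[of "{x}" X] xt by auto
    then have "X closure_of {x} \<inter> U \<noteq> {}" using x by blast
    then have "X closure_of {x} \<in> T" using U(2)[rule_format, OF Irr_cl_single[OF xt]] by simp
    then show "\<exists>y. y \<in> (\<lambda>x. X closure_of {x}) ` C \<and> y \<in> T" using x by blast
  qed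
  have s1: "?L closure_of {C} \<subseteq> ?L closure_of ((\<lambda>x. X closure_of {x}) ` C)"
    by (rule closure_of_minimal) (use Cin in auto)
  have "(\<lambda>x. X closure_of {x}) ` C \<subseteq> ?L closure_of {C}"
  proof
    fix D assume "D \<in> (\<lambda>x. X closure_of {x}) ` C"
    then obtain x where x: "x \<in> C" "D = X closure_of {x}" by blast
    have DC: "D \<subseteq> C" unfolding x(2) by (rule closure_of_minimal) (use x(1) Cc in auto)
    show "D \<in> ?L closure_of {C}"
      unfolding in_closure_of
    proof (intro conjI allI impI)
      show "D \<in> topspace ?L" using x by (simp add: topspace_LV)
      fix T assume "D \<in> T \<and> openin ?L T"
      then have "C \<in> T" using LV_up[OF _ _ DC Cc] by blast
      then show "\<exists>y. y \<in> {C} \<and> y \<in> T" by blast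
    qed
  qed
  then have s2: "?L closure_of ((\<lambda>x. X closure_of {x}) ` C) \<subseteq> ?L closure_of {C}"
    by (rule closure_of_minimal) auto
  show "?L closure_of {C} = ?L closure_of ((\<lambda>x. X closure_of {x}) ` C)"
    using s1 s2 by auto
qed

lemma Om_char:
  "{C \<in> topspace (lower_vietoris X).
        (lower_vietoris X) closure_of {C} = (lower_vietoris X) closure_of ((\<lambda>x. X closure_of {x}) ` C)}
   = {C. Irr X C}"
  using Om_1 Om_2 by blast

lemma DH_eq: "DH X = subtopology (lower_vietoris X) {C. Irr X C}"
  unfolding DH_def Om_char ..

lemma topspace_DH: "topspace (DH X) = {C. Irr X C}"
  unfolding DH_eq topspace_subtopology topspace_LV using Irr_closed by blast

lemma openin_DH: "openin (DH X) Ob \<longleftrightarrow> (\<exists>U. openin X U \<and> Ob = {C. Irr X C \<and> C \<inter> U \<noteq> {}})"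
proof
  assume "openin (DH X) Ob"
  then obtain T where T: "openin (lower_vietoris X) T" "Ob = T \<inter> {C. Irr X C}"
    unfolding DH_eq openin_subtopology by blast
  obtain U where U: "openin X U" "\<forall>C. Irr X C \<longrightarrow> (C \<in> T \<longleftrightarrow> C \<inter> U \<noteq> {})" using opens_char[OF T(1)] by blast
  have "Ob = {C. Irr X C \<and> C \<inter> U \<noteq> {}}" using T(2) U(2) by blast
  then show "\<exists>U. openin X U \<and> Ob = {C. Irr X C \<and> C \<inter> U \<noteq> {}}" using U(1) by blast
next
  assume "\<exists>U. openin X U \<and> Ob = {C. Irr X C \<and> C \<inter> U \<noteq> {}}"
  then obtain U where U: "openin X U" "Ob = {C. Irr X C \<and> C \<inter> U \<noteq> {}}" by blast
  have "Ob = {C. closedin X C \<and> C \<inter> U \<noteq> {}} \<inter> {C. Irr X C}" using U(2) Irr_closed by blast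
  then show "openin (DH X) Ob" unfolding DH_eq openin_subtopology using openin_LV_hit[OF U(1)] by blast
qed

lemma Union_down: assumes F: "closedin X F" shows "\<Union>{C. Irr X C \<and> C \<subseteq> F} = F"
proof
  show "\<Union>{C. Irr X C \<and> C \<subseteq> F} \<subseteq> F" by blast
  show "F \<subseteq> \<Union>{C. Irr X C \<and> C \<subseteq> F}"
  proof
    fix x assume x: "x \<in> F"
    have xt: "x \<in> topspace X" using x closedin_subset[OF F] by blast
    have "X closure_of {x} \<subseteq> F" by (rule closure_of_minimal) (use x F in auto)
    moreover have "x \<in> X closure_of {x}" using closure_of_subset[of "{x}" X] xt by auto
    ultimately show "x \<in> \<Union>{C. Irr X C \<and> C \<subseteq> F}" using Irr_cl_single[OF xt] by blast
  qed
qed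

lemma closedin_DH:
  assumes "closedin (DH X) \<C>"
  shows "closedin X (\<Union>\<C>)" "\<C> = {C. Irr X C \<and> C \<subseteq> \<Union>\<C>}"
proof -
  have sub: "\<C> \<subseteq> {C. Irr X C}" and op: "openin (DH X) ({C. Irr X C} - \<C>)"
    using assms unfolding closedin_def topspace_DH by auto
  obtain U where U: "openin X U" "{C. Irr X C} - \<C> = {C. Irr X C \<and> C \<inter> U \<noteq> {}}"
    using op unfolding openin_DH by blast
  define F where "F = topspace X - U"
  have F: "closedin X F" unfolding F_def using closedin_topspace U(1) by (rule closedin_diff)
  have mem: "C \<in> \<C> \<longleftrightarrow> Irr X C \<and> C \<subseteq> F" for C
  proof (cases "Irr X C")
    case True
    then have "C \<subseteq> topspace X" using closedin_subset Irr_closed by blast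
    then show ?thesis using True U(2) sub unfolding F_def by blast
  next
    case False then show ?thesis using sub by blast
  qed
  then have eq: "\<C> = {C. Irr X C \<and> C \<subseteq> F}" by blast
  have UF: "\<Union>\<C> = F" unfolding eq by (rule Union_down[OF F])
  show "closedin X (\<Union>\<C>)" unfolding UF by (rule F)
  show "\<C> = {C. Irr X C \<and> C \<subseteq> \<Union>\<C>}" unfolding UF by (rule eq)
qed

lemma closedin_DH_down:
  assumes F: "closedin X F"
  shows "closedin (DH X) {C. Irr X C \<and> C \<subseteq> F}"
  unfolding closedin_def
proof
  show "{C. Irr X C \<and> C \<subseteq> F} \<subseteq> topspace (DH X)" unfolding topspace_DH by blast
  have "topspace (DH X) - {C. Irr X C \<and> C \<subseteq> F} = {C. Irr X C \<and> C \<inter> (topspace X - F) \<noteq> {}}"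
  proof -
    have "C \<subseteq> topspace X" if "Irr X C" for C using that closedin_subset Irr_closed by blast
    then show ?thesis unfolding topspace_DH by blast
  qed
  moreover have "openin X (topspace X - F)" using openin_topspace F by (rule openin_diff)
  ultimately show "openin (DH X) (topspace (DH X) - {C. Irr X C \<and> C \<subseteq> F})"
    unfolding openin_DH by blast
qed

lemma mH_eq:
  assumes A: "\<C> \<subseteq> {C. closedin X C}"
  shows "mH X \<C> = X closure_of (\<Union>\<C>)"
proof -
  let ?L = "lower_vietoris X"
  have sub: "\<C> \<subseteq> ?L closure_of \<C>" by (rule closure_of_subset) (use A in \<open>simp add: topspace_LV\<close>)
  have U1: "\<Union>\<C> \<subseteq> topspace X" using A closedin_subset by blast
  have inc: "\<Union>(?L closure_of \<C>) \<subseteq> X closure_of (\<Union>\<C>)"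
  proof
    fix x assume "x \<in> \<Union>(?L closure_of \<C>)"
    then obtain D where D: "D \<in> ?L closure_of \<C>" "x \<in> D" by blast
    have "D \<in> topspace ?L" using D(1) closure_of_subset_topspace[of ?L \<C>] by blast
    then have Dc: "closedin X D" by (simp add: topspace_LV)
    have xt: "x \<in> topspace X" using D(2) closedin_subset[OF Dc] by blast
    show "x \<in> X closure_of (\<Union>\<C>)"
    proof (rule ccontr)
      assume nx: "x \<notin> X closure_of (\<Union>\<C>)"
      define U where "U = topspace X - X closure_of (\<Union>\<C>)"
      have Uo: "openin X U" unfolding U_def by (rule openin_diff[OF openin_topspace closedin_closure_of])
      have DU: "D \<in> {C. closedin X C \<and> C \<inter> U \<noteq> {}}" using Dc D(2) xt nx unfolding U_def by blast
      have "\<forall>T. D \<in> T \<and> openin ?L T \<longrightarrow> (\<exists>y. y \<in> \<C> \<and> y \<in> T)"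
        using D(1) unfolding in_closure_of by (rule conjunct2)
      from this[rule_format, OF conjI[OF DU openin_LV_hit[OF Uo]]]
      obtain C where C: "C \<in> \<C>" "C \<in> {C. closedin X C \<and> C \<inter> U \<noteq> {}}" by blast
      have "\<Union>\<C> \<subseteq> X closure_of (\<Union>\<C>)" by (rule closure_of_subset[OF U1])
      then show False using C unfolding U_def by blast
    qed
  qed
  have "X closure_of (\<Union>(?L closure_of \<C>)) \<subseteq> X closure_of (\<Union>\<C>)"
    by (rule closure_of_minimal[OF inc closedin_closure_of])
  moreover have "X closure_of (\<Union>\<C>) \<subseteq> X closure_of (\<Union>(?L closure_of \<C>))"
    by (rule closure_of_mono) (use sub in blast)
  ultimately show ?thesis unfolding mH_def by blast
qed

lemma partC: "homeomorphic_map (DH (DH X)) (DH X) (mH X)"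
proof -
  define Y where "Y = DH X"
  define g where "g = (\<lambda>F. {C. Irr X C \<and> C \<subseteq> F})"
  have tY: "topspace Y = {C. Irr X C}" unfolding Y_def by (rule topspace_DH)
  have tZ: "topspace (DH Y) = {\<C>. Irr Y \<C>}" by (rule topspace_DH)
  have openY: "openin Y {C. Irr X C \<and> C \<inter> U \<noteq> {}}" if "openin X U" for U
    unfolding Y_def openin_DH by (intro exI[of _ U] conjI that refl)
  have openY': "\<exists>U. openin X U \<and> \<U> = {C. Irr X C \<and> C \<inter> U \<noteq> {}}" if "openin Y \<U>" for \<U>
    using that unfolding Y_def openin_DH .
  have clx: "x \<in> X closure_of {x}" if "x \<in> topspace X" for x
    using closure_of_subset[of "{x}" X] that by auto
  have P1: "Irr X (\<Union>\<C>) \<and> g (\<Union>\<C>) = \<C> \<and> mH X \<C> = \<Union>\<C>" if I: "Irr Y \<C>" for \<C>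
  proof -
    have cl: "closedin Y \<C>" using I by (rule Irr_closed)
    have c2: "closedin X (\<Union>\<C>)" using closedin_DH(1)[OF cl[unfolded Y_def]] .
    have eq: "\<C> = g (\<Union>\<C>)" unfolding g_def by (rule closedin_DH(2)[OF cl[unfolded Y_def]])
    have subI: "\<C> \<subseteq> {C. Irr X C}" using closedin_subset[OF cl] tY by blast
    have "\<C> \<subseteq> {C. closedin X C}"
    proof (rule subsetI)
      fix C assume "C \<in> \<C>" then have "Irr X C" using subI by blast
      then show "C \<in> {C. closedin X C}" using Irr_closed by simp
    qed
    then have "mH X \<C> = X closure_of (\<Union>\<C>)" by (rule mH_eq)
    also have "\<dots> = \<Union>\<C>" by (simp add: closure_of_eq c2)
    finally have m: "mH X \<C> = \<Union>\<C>" .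
    have ne: "\<Union>\<C> \<noteq> {}"
    proof -
      have "\<C> \<noteq> {}" using I by (simp add: Irr_def)
      then obtain C where C: "C \<in> \<C>" by blast
      then have "C \<noteq> {}" using subI by (auto simp: Irr_def)
      then show ?thesis using C by blast
    qed
    have hit: "\<C> \<inter> {C. Irr X C \<and> C \<inter> W \<noteq> {}} \<noteq> {}" if W: "\<Union>\<C> \<inter> W \<noteq> {}" for W
    proof -
      obtain x where x: "x \<in> \<Union>\<C>" "x \<in> W" using W by blast
      have xt: "x \<in> topspace X" using x(1) c2 closedin_subset by blast
      have "X closure_of {x} \<subseteq> \<Union>\<C>" by (rule closure_of_minimal) (use x c2 in auto)
      then have "X closure_of {x} \<in> g (\<Union>\<C>)" unfolding g_def using Irr_cl_single[OF xt] by blast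
      then have mem: "X closure_of {x} \<in> \<C>" by (subst eq)
      have "X closure_of {x} \<inter> W \<noteq> {}" using x(2) clx[OF xt] by blast
      then show ?thesis using mem Irr_cl_single[OF xt] by blast
    qed
    have pw: "\<Union>\<C> \<inter> U \<inter> V \<noteq> {}"
      if U: "openin X U" and V: "openin X V" and FU: "\<Union>\<C> \<inter> U \<noteq> {}" and FV: "\<Union>\<C> \<inter> V \<noteq> {}" for U V
    proof -
      have IrrY: "openin Y A \<Longrightarrow> openin Y B \<Longrightarrow> \<C> \<inter> A \<noteq> {} \<Longrightarrow> \<C> \<inter> B \<noteq> {} \<Longrightarrow> \<C> \<inter> A \<inter> B \<noteq> {}" for A B
        using I unfolding Irr_def by blast
      have "\<C> \<inter> {C. Irr X C \<and> C \<inter> U \<noteq> {}} \<inter> {C. Irr X C \<and> C \<inter> V \<noteq> {}} \<noteq> {}"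
        by (rule IrrY[OF openY[OF U] openY[OF V] hit[OF FU] hit[OF FV]])
      then obtain C where C: "C \<in> \<C>" "Irr X C" "C \<inter> U \<noteq> {}" "C \<inter> V \<noteq> {}" by blast
      have "C \<inter> U \<inter> V \<noteq> {}" using C(2) U V C(3,4) unfolding Irr_def by blast
      then show ?thesis using C(1) by blast
    qed
    have "Irr X (\<Union>\<C>)" unfolding Irr_def using c2 ne pw by blast
    then show ?thesis using eq[symmetric] m by (intro conjI)
  qed
  have P2: "Irr Y (g F)" if I: "Irr X F" for F
  proof -
    have Fc: "closedin X F" using I by (rule Irr_closed)
    have c: "closedin Y (g F)" unfolding Y_def g_def by (rule closedin_DH_down[OF Fc])
    have ne: "g F \<noteq> {}" using I unfolding g_def by blast
    have pw: "g F \<inter> \<U> \<inter> \<V> \<noteq> {}"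
      if U: "openin Y \<U>" and V: "openin Y \<V>" and FU: "g F \<inter> \<U> \<noteq> {}" and FV: "g F \<inter> \<V> \<noteq> {}" for \<U> \<V>
    proof -
      obtain U where U': "openin X U" "\<U> = {C. Irr X C \<and> C \<inter> U \<noteq> {}}" using openY'[OF U] by blast
      obtain V where V': "openin X V" "\<V> = {C. Irr X C \<and> C \<inter> V \<noteq> {}}" using openY'[OF V] by blast
      have "F \<inter> U \<noteq> {}" using FU unfolding U'(2) g_def by blast
      moreover have "F \<inter> V \<noteq> {}" using FV unfolding V'(2) g_def by blast
      ultimately have "F \<inter> U \<inter> V \<noteq> {}" using I U'(1) V'(1) unfolding Irr_def by blast
      then have "F \<in> g F \<inter> \<U> \<inter> \<V>" using I unfolding U'(2) V'(2) g_def by blast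
      then show ?thesis by blast
    qed
    show ?thesis unfolding Irr_def using c ne pw by blast
  qed
  have P3: "mH X (g F) = F" if I: "Irr X F" for F
  proof -
    have Fc: "closedin X F" using I by (rule Irr_closed)
    have "g F \<subseteq> {C. closedin X C}"
    proof (rule subsetI)
      fix C assume "C \<in> g F" then have "Irr X C" unfolding g_def by simp
      then show "C \<in> {C. closedin X C}" using Irr_closed by simp
    qed
    then have "mH X (g F) = X closure_of (\<Union>(g F))" by (rule mH_eq)
    also have "\<Union>(g F) = F" unfolding g_def by (rule Union_down[OF Fc])
    also have "X closure_of F = F" by (simp add: closure_of_eq Fc)
    finally show ?thesis .
  qed
  have P1a: "Irr X (\<Union>\<C>)" and P1b: "g (\<Union>\<C>) = \<C>" and P1c: "mH X \<C> = \<Union>\<C>" if I: "Irr Y \<C>" for \<C>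
    using P1[OF I] by blast+
  have cf: "continuous_map (DH Y) Y (mH X)"
    unfolding continuous_map
  proof (intro conjI allI impI)
    show "mH X ` topspace (DH Y) \<subseteq> topspace Y"
    proof (rule image_subsetI)
      fix \<C> assume "\<C> \<in> topspace (DH Y)"
      then have I: "Irr Y \<C>" using tZ by simp
      show "mH X \<C> \<in> topspace Y" unfolding tY P1c[OF I] using P1a[OF I] by simp
    qed
    fix Ob assume "openin Y Ob"
    then obtain U where U: "openin X U" "Ob = {C. Irr X C \<and> C \<inter> U \<noteq> {}}" using openY' by blast
    have key: "mH X \<C> \<in> Ob \<longleftrightarrow> \<C> \<inter> {C. Irr X C \<and> C \<inter> U \<noteq> {}} \<noteq> {}" if I: "Irr Y \<C>" for \<C>
    proof -
      have P: "Irr X (\<Union>\<C>)" "mH X \<C> = \<Union>\<C>" using P1a[OF I] P1c[OF I] by blast+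
      have sub: "\<C> \<subseteq> {C. Irr X C}" using closedin_subset[OF Irr_closed[OF I]] tY by blast
      show ?thesis unfolding P(2) U(2) using P(1) sub by blast
    qed
    have "{\<C> \<in> topspace (DH Y). mH X \<C> \<in> Ob} = {\<C>. Irr Y \<C> \<and> \<C> \<inter> {C. Irr X C \<and> C \<inter> U \<noteq> {}} \<noteq> {}}"
      unfolding tZ using key by blast
    moreover have "openin (DH Y) {\<C>. Irr Y \<C> \<and> \<C> \<inter> {C. Irr X C \<and> C \<inter> U \<noteq> {}} \<noteq> {}}"
      unfolding openin_DH using openY[OF U(1)] by blast
    ultimately show "openin (DH Y) {\<C> \<in> topspace (DH Y). mH X \<C> \<in> Ob}" by simp
  qed
  have cg: "continuous_map Y (DH Y) g"
    unfolding continuous_map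
  proof (intro conjI allI impI)
    show "g ` topspace Y \<subseteq> topspace (DH Y)"
    proof (rule image_subsetI)
      fix F assume "F \<in> topspace Y"
      then have I: "Irr X F" using tY by simp
      show "g F \<in> topspace (DH Y)" unfolding tZ using P2[OF I] by simp
    qed
    fix Ob assume "openin (DH Y) Ob"
    then obtain \<U> where UU: "openin Y \<U>" "Ob = {\<C>. Irr Y \<C> \<and> \<C> \<inter> \<U> \<noteq> {}}" unfolding openin_DH by blast
    obtain U where U: "openin X U" "\<U> = {C. Irr X C \<and> C \<inter> U \<noteq> {}}" using openY'[OF UU(1)] by blast
    have key: "g F \<in> Ob \<longleftrightarrow> F \<inter> U \<noteq> {}" if I: "Irr X F" for F
    proof -
      have "g F \<in> Ob \<longleftrightarrow> g F \<inter> \<U> \<noteq> {}" unfolding UU(2) using P2[OF I] by blast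
      also have "\<dots> \<longleftrightarrow> F \<inter> U \<noteq> {}" unfolding U(2) g_def using I by blast
      finally show ?thesis .
    qed
    have "{F \<in> topspace Y. g F \<in> Ob} = {F. Irr X F \<and> F \<inter> U \<noteq> {}}" unfolding tY using key by blast
    then show "openin Y {F \<in> topspace Y. g F \<in> Ob}" using openY[OF U(1)] by simp
  qed
  have "homeomorphic_maps (DH Y) Y (mH X) g"
    unfolding homeomorphic_maps_def
  proof (intro conjI ballI cf cg)
    fix \<C> assume "\<C> \<in> topspace (DH Y)"
    then have "Irr Y \<C>" unfolding tZ by simp
    then show "g (mH X \<C>) = \<C>" unfolding P1c[OF \<open>Irr Y \<C>\<close>] by (rule P1b)
  next
    fix F assume "F \<in> topspace Y"
    then have "Irr X F" unfolding tY by simp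
    then show "mH X (g F) = F" by (rule P3)
  qed
  then show ?thesis unfolding Y_def homeomorphic_map_maps by blast
qed

theorem theorem5p6:
  shows "(\<forall>X :: 'a measure. meas_iso (DP (DP X)) (DP X) (mP X))
       \<and> (\<forall>X :: 'b measure. meas_iso (DM (DM X)) (DM X) (mM X))
       \<and> (\<forall>X :: 'c topology. homeomorphic_map (DH (DH X)) (DH X) (mH X))"
  using partA partB partC by blast

end
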